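(* Let $n\ge 2$, $X=\{0,1\}^n$, let $C$ be the family of cylinders in $X$, and let $\mu$ be the uniform distribution on $X$. Then every weak $\frac14$-net for $C$ over $\mu$ has size at least $\log_2 n$.
   Context: A set $c\subseteq\{0,1\}^n$ is a cylinder if there are $Y\subseteq[n]$ and $v\in\{0,1\}^Y$ with $c=\{u\in\{0,1\}^n : u|_Y=v\}$. A weak $\varepsilon$-net for $C$ over $\mu$ is a set $S\subseteq X$ meeting every $c\in C$ with $\mu(c)\ge\varepsilon$. *)

theory Defs
  imports "HOL-Probability.Probability"
begin

definition cube :: "nat \<Rightarrow> bool list set" where
  "cube n = {u. length u = n}"

text \<open>Cylinder determined by Y \<subseteq> [n] and v : Y \<rightarrow> {0,1}
  (values of v outside Y are irrelevant).\<close>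
definition cylinder :: "nat \<Rightarrow> nat set \<Rightarrow> (nat \<Rightarrow> bool) \<Rightarrow> bool list set" where
  "cylinder n Y v = {u \<in> cube n. \<forall>i\<in>Y. u ! i = v i}"

definition cylinders :: "nat \<Rightarrow> bool list set set" where
  "cylinders n = {c. \<exists>Y v. Y \<subseteq> {..<n} \<and> c = cylinder n Y v}"

definition unif_cube :: "nat \<Rightarrow> bool list pmf" where
  "unif_cube n = pmf_of_set (cube n)"

definition weak_eps_net :: "'a set \<Rightarrow> 'a set set \<Rightarrow> 'a pmf \<Rightarrow> real \<Rightarrow> 'a set \<Rightarrow> bool" where
  "weak_eps_net X C \<mu> \<epsilon> S \<longleftrightarrow> S \<subseteq> X \<and>
     (\<forall>c\<in>C. measure_pmf.prob \<mu> c \<ge> \<epsilon> \<longrightarrow> S \<inter> c \<noteq> {})"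

end

theory Submission
  imports Defs
begin

lemma finite_cube: "finite (cube n)"
proof -
  have "cube n = {xs. set xs \<subseteq> (UNIV::bool set) \<and> length xs = n}"
    by (auto simp: cube_def)
  then show ?thesis using finite_lists_length_eq[of "UNIV::bool set" n] by simp
qed

lemma cube_ne: "cube n \<noteq> {}"
  using length_replicate[of n False] unfolding cube_def by blast

lemma cyl_big:
  assumes "i < n" "j < n" "i \<noteq> j"
  defines "C \<equiv> cylinder n {i,j} (\<lambda>k. k = i)"
  shows "measure_pmf.prob (unif_cube n) C \<ge> 1/4"
proof -
  define g1 where "g1 = (\<lambda>u::bool list. u[i := \<not> u!i])"
  define g2 where "g2 = (\<lambda>u::bool list. u[j := \<not> u!j])"
  have Csub: "C \<subseteq> cube n" unfolding C_def cylinder_def by auto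
  have finC: "finite C" using Csub finite_cube finite_subset by blast
  have cov: "cube n \<subseteq> C \<union> g1 ` C \<union> g2 ` C \<union> (g1 \<circ> g2) ` C"
  proof
    fix u assume u: "u \<in> cube n"
    then have len: "length u = n" by (simp add: cube_def)
    consider "u!i \<and> \<not> u!j" | "\<not> u!i \<and> \<not> u!j" | "u!i \<and> u!j" | "\<not> u!i \<and> u!j" by blast
    then show "u \<in> C \<union> g1 ` C \<union> g2 ` C \<union> (g1 \<circ> g2) ` C"
    proof cases
      case 1 then show ?thesis using len assms(3) by (auto simp: C_def cylinder_def cube_def)
    next
      case 2
      have "g1 u \<in> C" using 2 len assms by (auto simp: C_def cylinder_def cube_def g1_def)
      moreover have "u = g1 (g1 u)" using len assms by (simp add: g1_def)
      ultimately show ?thesis by blast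
    next
      case 3
      have "g2 u \<in> C" using 3 len assms by (auto simp: C_def cylinder_def cube_def g2_def)
      moreover have "u = g2 (g2 u)" using len assms by (simp add: g2_def)
      ultimately show ?thesis by blast
    next
      case 4
      have "g2 (g1 u) \<in> C" using 4 len assms by (auto simp: C_def cylinder_def cube_def g1_def g2_def nth_list_update)
      moreover have "u = (g1 \<circ> g2) (g2 (g1 u))" using len assms
        by (simp add: g1_def g2_def nth_list_update list_update_swap)
      ultimately show ?thesis by blast
    qed
  qed
  have "card (cube n) \<le> card (C \<union> g1 ` C \<union> g2 ` C \<union> (g1 \<circ> g2) ` C)"
    using finC cov by (intro card_mono) auto
  also have "\<dots> \<le> card C + card (g1 ` C) + card (g2 ` C) + card ((g1 \<circ> g2) ` C)"
  proof -
    have a: "card (C \<union> g1 ` C) \<le> card C + card (g1 ` C)" by (rule card_Un_le)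
    have b: "card (C \<union> g1 ` C \<union> g2 ` C) \<le> card (C \<union> g1 ` C) + card (g2 ` C)" by (rule card_Un_le)
    have c: "card (C \<union> g1 ` C \<union> g2 ` C \<union> (g1 \<circ> g2) ` C) \<le> card (C \<union> g1 ` C \<union> g2 ` C) + card ((g1 \<circ> g2) ` C)" by (rule card_Un_le)
    show ?thesis using a b c by linarith
  qed
  also have "\<dots> \<le> 4 * card C"
    using card_image_le[OF finC, of g1] card_image_le[OF finC, of g2] card_image_le[OF finC, of "g1 \<circ> g2"]
    by linarith
  finally have le: "card (cube n) \<le> 4 * card C" .
  have "measure_pmf.prob (unif_cube n) C = card (cube n \<inter> C) / card (cube n)"
    unfolding unif_cube_def by (rule measure_pmf_of_set[OF cube_ne finite_cube])
  also have "cube n \<inter> C = C" using Csub by blast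
  finally have eq: "measure_pmf.prob (unif_cube n) C = card C / card (cube n)" .
  have pos: "card (cube n) > 0" using cube_ne finite_cube card_gt_0_iff by blast
  have "real (card (cube n)) \<le> 4 * real (card C)" using le by linarith
  then show ?thesis unfolding eq using pos by (simp add: field_simps)
qed

theorem claim1:
  fixes n :: nat and S :: "bool list set"
  assumes "n \<ge> 2"
    and "weak_eps_net (cube n) (cylinders n) (unif_cube n) (1/4) S"
  shows "real (card S) \<ge> log 2 (real n)"
proof -
  have Ssub: "S \<subseteq> cube n" and net: "\<forall>c\<in>cylinders n. measure_pmf.prob (unif_cube n) c \<ge> 1/4 \<longrightarrow> S \<inter> c \<noteq> {}"
    using assms(2) by (auto simp: weak_eps_net_def)
  have finS: "finite S" using Ssub finite_cube finite_subset by blast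
  define f where "f = (\<lambda>i. {u\<in>S. u!i})"
  have inj: "inj_on f {..<n}"
  proof (rule inj_onI, rule ccontr)
    fix i j assume i: "i \<in> {..<n}" and j: "j \<in> {..<n}" and fe: "f i = f j" and ne: "i \<noteq> j"
    define C where "C = cylinder n {i,j} (\<lambda>k. k = i)"
    have "C \<in> cylinders n" unfolding cylinders_def mem_Collect_eq C_def
      apply (rule exI[of _ "{i,j}"], rule exI[of _ "\<lambda>k. k = i"]) using i j by auto
    moreover have "measure_pmf.prob (unif_cube n) C \<ge> 1/4" unfolding C_def
      by (rule cyl_big) (use i j ne in auto)
    ultimately have "S \<inter> C \<noteq> {}" using net by blast
    then obtain u where u: "u \<in> S" "u \<in> C" by blast
    then have "u!i" "\<not> u!j" using ne by (auto simp: C_def cylinder_def)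
    moreover have "u \<in> f i \<longleftrightarrow> u \<in> f j" using fe by simp
    ultimately show False using u by (simp add: f_def)
  qed
  have "f ` {..<n} \<subseteq> Pow S" by (auto simp: f_def)
  then have "card (f ` {..<n}) \<le> card (Pow S)" using finS by (intro card_mono) auto
  then have "n \<le> 2 ^ card S" using card_image[OF inj] card_Pow[of S] finS by simp
  then have "real n \<le> real (2 ^ card S)" by (simp only: of_nat_le_iff)
  then have "real n \<le> 2 powr real (card S)" by (simp add: powr_realpow)
  moreover have "real n > 0" using assms(1) by simp
  ultimately show ?thesis by (simp add: log_le_iff)
qed

end
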